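(* Let $0<\alpha<1$ and $\gamma>0$. Consider the heterogeneous Galton–Watson process $\{Z_t\}_{t\ge 0}$ with $Z_0=1$, in which each individual of generation $t$ independently has either $2$ offspring, with probability $\alpha/(1+t)^{\gamma}$, or $0$ offspring, with probability $1-\alpha/(1+t)^{\gamma}$. Let $T_{ex}=\min\{t: Z_t=0\}$ be the extinction time. Then there exists a constant $C_0>0$, depending only on $\alpha$ and $\gamma$, such that for every integer $t\ge 1$, $$\mathbb{P}(T_{ex}>t) < C_0\left(\frac{t^{\gamma}}{2\alpha\, e^{\gamma}}\right)^{-t}.$$
   Context: This Galton–Watson process models the tree-generating prior of Bayesian CART/BART. In that prior, a node at depth $t$ of a binary tree is split into two children with probability $\alpha/(1+t)^\gamma$, and the root has depth $0$. The variable $Z_t$ is the number of nodes at depth $t$. *)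

theory Defs
  imports "HOL-Probability.Probability"
begin

definition split_prob :: "real \<Rightarrow> real \<Rightarrow> nat \<Rightarrow> real" where
  "split_prob \<alpha> \<gamma> t = \<alpha> / (1 + real t) powr \<gamma>"

text \<open>Joint law of the path (Z_0, ..., Z_t) as a list of length t+1.
  Given Z_t = n, each of the n individuals independently has 2 offspring with
  probability split_prob, else 0; so Z_(t+1) = 2 * Binomial(n, split_prob t).\<close>
primrec gw_path :: "real \<Rightarrow> real \<Rightarrow> nat \<Rightarrow> nat list pmf" where
  "gw_path \<alpha> \<gamma> 0 = return_pmf [1]"
| "gw_path \<alpha> \<gamma> (Suc t) =
     bind_pmf (gw_path \<alpha> \<gamma> t)
       (\<lambda>xs. map_pmf (\<lambda>k. xs @ [2 * k]) (binomial_pmf (last xs) (split_prob \<alpha> \<gamma> t)))"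

definition survival_prob :: "real \<Rightarrow> real \<Rightarrow> nat \<Rightarrow> real" where
  "survival_prob \<alpha> \<gamma> t =
     measure_pmf.prob (gw_path \<alpha> \<gamma> t) {xs. \<forall>s\<le>t. xs ! s \<noteq> 0}"

end

theory Submission
  imports Defs
begin

lemma bin_mean:
  assumes p: "p \<in> {0..1}"
  shows "(\<integral>\<^sup>+k. ennreal (real k) \<partial>binomial_pmf n p) = ennreal (real n * p)"
proof (induction n)
  case 0
  then show ?case using p by (simp add: binomial_pmf_0)
next
  case (Suc n)
  have "(\<integral>\<^sup>+k. ennreal (real k) \<partial>binomial_pmf (Suc n) p)
     = (\<integral>\<^sup>+b. \<integral>\<^sup>+k. ennreal (real ((if b then 1 else 0) + k)) \<partial>binomial_pmf n p \<partial>bernoulli_pmf p)"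
    using p by (simp add: binomial_pmf_Suc)
  also have "\<dots> = (\<integral>\<^sup>+b. ennreal (if b then 1 else 0) + ennreal (real n * p) \<partial>bernoulli_pmf p)"
    by (intro nn_integral_cong) (auto simp add: nn_integral_add Suc[symmetric] ennreal_plus)
  also have "\<dots> = ennreal p * ennreal (1 + p * real n) + ennreal (1 - p) * ennreal (p * real n)"
    using p by (simp add: nn_integral_add nn_integral_bernoulli_pmf ennreal_plus[symmetric] algebra_simps del: ennreal_plus)
  also have "\<dots> = ennreal (p * (1 + p * real n) + (1 - p) * (p * real n))"
    using p by (simp add: ennreal_mult[symmetric] ennreal_plus[symmetric] del: ennreal_plus)
  also have "\<dots> = ennreal (real (Suc n) * p)"
    by (simp add: algebra_simps)
  finally show ?case .
qed

lemma gw_len: "xs \<in> set_pmf (gw_path \<alpha> \<gamma> t) \<Longrightarrow> length xs = Suc t"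
  by (induction t arbitrary: xs) auto


lemma gw_mean:
  assumes "\<And>s. split_prob \<alpha> \<gamma> s \<in> {0..1}"
  shows "(\<integral>\<^sup>+xs. ennreal (real (last xs)) \<partial>gw_path \<alpha> \<gamma> t)
     = ennreal (\<Prod>s<t. 2 * split_prob \<alpha> \<gamma> s)"
proof (induction t)
  case 0
  then show ?case by simp
next
  case (Suc t)
  define p where "p = split_prob \<alpha> \<gamma> t"
  have p: "p \<in> {0..1}" using assms p_def by auto
  have "(\<integral>\<^sup>+xs. ennreal (real (last xs)) \<partial>gw_path \<alpha> \<gamma> (Suc t))
      = (\<integral>\<^sup>+xs. \<integral>\<^sup>+k. 2 * ennreal (real k) \<partial>binomial_pmf (last xs) p \<partial>gw_path \<alpha> \<gamma> t)"
    by (simp add: p_def ennreal_mult' mult.commute)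
  also have "\<dots> = (\<integral>\<^sup>+xs. ennreal (2 * p) * ennreal (real (last xs)) \<partial>gw_path \<alpha> \<gamma> t)"
  proof (intro nn_integral_cong)
    fix xs :: "nat list"
    have "(\<integral>\<^sup>+k. 2 * ennreal (real k) \<partial>binomial_pmf (last xs) p) = 2 * ennreal (real (last xs) * p)"
      by (simp add: nn_integral_cmult bin_mean[OF p])
    also have "\<dots> = ennreal (2 * p) * ennreal (real (last xs))"
    proof -
      have "2 * ennreal (real (last xs) * p) = ennreal 2 * ennreal (real (last xs) * p)" by simp
      also have "\<dots> = ennreal (2 * (real (last xs) * p))" by (rule ennreal_mult'[symmetric]) simp
      also have "\<dots> = ennreal ((2 * p) * real (last xs))" by (simp add: mult_ac)
      also have "\<dots> = ennreal (2 * p) * ennreal (real (last xs))" by (rule ennreal_mult') (use p in simp)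
      finally show ?thesis .
    qed
    finally show "(\<integral>\<^sup>+k. 2 * ennreal (real k) \<partial>binomial_pmf (last xs) p) = ennreal (2 * p) * ennreal (real (last xs))" .
  qed
  also have "\<dots> = ennreal (2 * p) * ennreal (\<Prod>s<t. 2 * split_prob \<alpha> \<gamma> s)"
    by (simp add: nn_integral_cmult Suc)
  also have "\<dots> = ennreal (\<Prod>s<Suc t. 2 * split_prob \<alpha> \<gamma> s)"
    using p assms by (simp add: ennreal_mult[symmetric] prod_nonneg p_def mult_ac)
  finally show ?case .
qed

lemma surv_le:
  assumes "\<And>s. split_prob \<alpha> \<gamma> s \<in> {0..1}"
  shows "survival_prob \<alpha> \<gamma> t \<le> (\<Prod>s<t. 2 * split_prob \<alpha> \<gamma> s)"
proof -
  let ?M = "gw_path \<alpha> \<gamma> t"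
  let ?A = "{xs. \<forall>s\<le>t. xs ! s \<noteq> 0}"
  have "ennreal (survival_prob \<alpha> \<gamma> t) = emeasure ?M ?A"
    by (simp add: survival_prob_def measure_pmf.emeasure_eq_measure)
  also have "\<dots> = (\<integral>\<^sup>+xs. indicator ?A xs \<partial>?M)"
    by simp
  also have "\<dots> \<le> (\<integral>\<^sup>+xs. ennreal (real (last xs)) \<partial>?M)"
  proof (intro nn_integral_mono_AE AE_pmfI)
    fix xs assume xs: "xs \<in> set_pmf ?M"
    have l: "length xs = Suc t" using gw_len[OF xs] .
    hence "last xs = xs ! t" by (cases xs rule: rev_cases) auto
    then show "indicator ?A xs \<le> ennreal (real (last xs))"
      by (auto simp: indicator_def)
  qed
  also have "\<dots> = ennreal (\<Prod>s<t. 2 * split_prob \<alpha> \<gamma> s)"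
    by (rule gw_mean[OF assms])
  finally show ?thesis
    using assms by (simp add: prod_nonneg ennreal_le_iff)
qed


lemma pow_le_exp_fact: "(x::real) \<ge> 0 \<Longrightarrow> x ^ n \<le> exp x * fact n"
proof -
  assume x: "x \<ge> 0"
  have S: "summable (\<lambda>k. x ^ k /\<^sub>R fact k)" using exp_converges sums_summable by blast
  have "x ^ n /\<^sub>R fact n = (\<Sum>k\<in>{n}. x ^ k /\<^sub>R fact k)" by simp
  also have "\<dots> \<le> (\<Sum>k. x ^ k /\<^sub>R fact k)"
    by (rule sum_le_suminf[OF S]) (use x in auto)
  also have "\<dots> = exp x" using exp_converges sums_unique by metis
  finally have "x ^ n / fact n \<le> exp x" by (simp add: divide_inverse mult.commute)
  then show ?thesis by (simp add: divide_le_eq mult.commute)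
qed

lemma prod_fact: "(\<Prod>s<t. (1 + real s)) = fact t"
  by (induction t) (auto simp: algebra_simps)

lemma prod_eq:
  "(\<Prod>s<t. 2 * split_prob \<alpha> \<gamma> s) = (2 * \<alpha>) ^ t / (fact t) powr \<gamma>"
proof -
  have "(\<Prod>s<t. 2 * split_prob \<alpha> \<gamma> s) = (\<Prod>s<t. 2 * \<alpha>) / (\<Prod>s<t. (1 + real s) powr \<gamma>)"
    by (simp add: split_prob_def prod_dividef)
  also have "(\<Prod>s<t. (1 + real s) powr \<gamma>) = (fact t) powr \<gamma>"
    by (simp add: prod_powr_distrib[symmetric] prod_fact)
  finally show ?thesis by simp
qed

theorem corollary1:
  fixes \<alpha> \<gamma> :: real
  assumes "0 < \<alpha>" and "\<alpha> < 1" and "0 < \<gamma>"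
  shows "\<exists>C0 > 0. \<forall>t::nat. t \<ge> 1 \<longrightarrow>
           survival_prob \<alpha> \<gamma> t
             < C0 * ((real t powr \<gamma> / (2 * \<alpha> * exp \<gamma>)) powr (- real t))"
proof (intro exI[of _ 2] conjI allI impI)
  fix t :: nat assume t: "t \<ge> 1"
  have sp: "split_prob \<alpha> \<gamma> s \<in> {0..1}" for s
  proof -
    have "1 \<le> (1 + real s) powr \<gamma>" using assms by (simp add: ge_one_powr_ge_zero)
    then show ?thesis using assms by (auto simp: split_prob_def divide_le_eq)
  qed
  define b where "b = real t powr \<gamma> / (2 * \<alpha> * exp \<gamma>)"
  have tpos: "real t > 0" using t by simp
  have bpos: "b > 0" using assms tpos by (simp add: b_def)
  have fpos: "(fact t :: real) > 0" by simp
  have key: "real t powr (\<gamma> * real t) \<le> exp (\<gamma> * real t) * fact t powr \<gamma>"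
  proof -
    have "real t powr (\<gamma> * real t) = (real t ^ t) powr \<gamma>"
      using tpos by (simp add: powr_realpow[symmetric] powr_powr mult.commute)
    also have "\<dots> \<le> (exp (real t) * fact t) powr \<gamma>"
      by (rule powr_mono2) (use assms pow_le_exp_fact[of "real t" t] in auto)
    also have "\<dots> = exp (\<gamma> * real t) * fact t powr \<gamma>"
    proof -
      have "exp (real t) powr \<gamma> = exp (\<gamma> * real t)" by (simp add: powr_def mult.commute)
      then show ?thesis by (simp add: powr_mult)
    qed
    finally show ?thesis .
  qed
  have beq: "b powr (- real t) = (2 * \<alpha>) ^ t * exp (\<gamma> * real t) / real t powr (\<gamma> * real t)"
  proof -
    have "b powr (- real t) = (2 * \<alpha> * exp \<gamma>) powr real t / (real t powr \<gamma>) powr real t"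
      using assms tpos by (simp add: b_def powr_divide powr_minus_divide)
    also have "(2 * \<alpha> * exp \<gamma>) powr real t = (2 * \<alpha>) ^ t * exp (\<gamma> * real t)"
    proof -
      have "exp \<gamma> powr real t = exp (\<gamma> * real t)" by (simp add: powr_def mult.commute)
      moreover have "(2 * \<alpha>) powr real t = (2 * \<alpha>) ^ t" using assms by (simp add: powr_realpow)
      ultimately show ?thesis using assms by (simp add: powr_mult)
    qed
    also have "(real t powr \<gamma>) powr real t = real t powr (\<gamma> * real t)"
      by (simp add: powr_powr)
    finally show ?thesis .
  qed
  have "survival_prob \<alpha> \<gamma> t \<le> (2 * \<alpha>) ^ t / (fact t) powr \<gamma>"
    using surv_le[OF sp] prod_eq by metis
  also have "\<dots> \<le> b powr (- real t)"
    unfolding beq using key assms tpos fpos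
    by (simp add: divide_simps)
  also have "\<dots> < 2 * b powr (- real t)" using bpos by simp
  finally show "survival_prob \<alpha> \<gamma> t < 2 * (real t powr \<gamma> / (2 * \<alpha> * exp \<gamma>)) powr (- real t)"
    by (simp add: b_def)
qed simp

end
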